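(* Let $P\subset\mathbb{R}^k$ be a centrally symmetric $k$-dimensional polytope whose vertex set is $\{\pm v_1,\ldots,\pm v_n\}$, these $2n$ vectors being pairwise distinct. Then $$\sum_{i=1}^n\frac{\vol N_P(v_i)}{\vol P}\geqslant k,$$ with equality if and only if $P$ is a simplicial polytope.
   Context: $N_P(v)$ (the star of a vertex $v$) is the union of the sets $\mathop{\rm co}(F\cup\{0\})$ over all facets $F$ of $P$ containing $v$ or containing $-v$. $\vol$ is $k$-dimensional volume. *)

theory Defs
  imports "HOL-Analysis.Analysis"
begin

definition star_of :: "'a::euclidean_space set \<Rightarrow> 'a \<Rightarrow> 'a set" where
  "star_of P v = \<Union>{convex hull (insert 0 F) | F. F facet_of P \<and> (v \<in> F \<or> - v \<in> F)}"

definition simplicial_polytope :: "'a::euclidean_space set \<Rightarrow> bool" where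
  "simplicial_polytope P \<longleftrightarrow> (\<forall>F. F facet_of P \<longrightarrow> (aff_dim P - 1) simplex F)"

end

theory Submission
  imports Defs
begin

lemma zero_interior:
  fixes P :: "'a::euclidean_space set"
  assumes "convex P" "aff_dim P = int DIM('a)" "\<forall>x\<in>P. - x \<in> P"
  shows "0 \<in> interior P"
proof -
  have ah: "affine hull P = UNIV" using assms(2) aff_dim_eq_full by blast
  have "P \<noteq> {}" using assms(2) by auto
  then have "rel_interior P \<noteq> {}" using rel_interior_eq_empty assms(1) by blast
  then obtain x where x: "x \<in> interior P" using rel_interior_interior[OF ah] by auto
  then obtain e where e: "e > 0" "ball x e \<subseteq> P" using mem_interior by blast
  have "ball (-x) e \<subseteq> P"
  proof
    fix y assume "y \<in> ball (-x) e"
    then have "-y \<in> ball x e" by (simp add: dist_norm norm_minus_commute add.commute)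
    then have "-y \<in> P" using e by auto
    then show "y \<in> P" using assms(3) by force
  qed
  then have "-x \<in> interior P" using e mem_interior by blast
  then have "(1/2) *\<^sub>R x + (1/2) *\<^sub>R (-x) \<in> interior P"
    using x convex_interior[OF assms(1)] by (intro convexD) auto
  then show ?thesis by simp
qed

lemma facet_normal:
  fixes P :: "'a::euclidean_space set"
  assumes "polyhedron P" "0 \<in> interior P" "F facet_of P"
  shows "\<exists>w. P \<subseteq> {x. w \<bullet> x \<le> 1} \<and> F = P \<inter> {x. w \<bullet> x = 1}"
proof -
  obtain a b where ab: "a \<noteq> 0" "P \<subseteq> {x. a \<bullet> x \<le> b}" "F = P \<inter> {x. a \<bullet> x = b}"
    using facet_of_polyhedron[OF assms(1) assms(3)] by blast
  obtain e where e: "e > 0" "ball 0 e \<subseteq> P" using assms(2) mem_interior by blast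
  define p where "p = (e / 2 / norm a) *\<^sub>R a"
  have "norm p = e/2" using ab(1) e(1) by (simp add: p_def)
  then have "p \<in> P" using e by auto
  then have "a \<bullet> p \<le> b" using ab by auto
  moreover have "a \<bullet> p = e / 2 * norm a"
    using ab(1) by (simp add: p_def inner_commute power2_norm_eq_inner[symmetric] power2_eq_square)
  moreover have "e / 2 * norm a > 0" using e ab by simp
  ultimately have b: "b > 0" by linarith
  define w where "w = (1/b) *\<^sub>R a"
  have wx: "\<And>x. w \<bullet> x = (a \<bullet> x) / b" by (simp add: w_def)
  have "\<And>x. (w \<bullet> x \<le> 1) = (a \<bullet> x \<le> b)" "\<And>x. (w \<bullet> x = 1) = (a \<bullet> x = b)"
    unfolding wx using b by (auto simp: divide_simps)
  then show ?thesis using ab by (intro exI[of _ w]) auto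
qed


lemma pyr_repr:
  fixes P :: "'a::euclidean_space set"
  assumes "F facet_of P" "x \<in> convex hull (insert 0 F)"
  shows "\<exists>t y. 0 \<le> t \<and> t \<le> 1 \<and> y \<in> F \<and> x = t *\<^sub>R y"
proof -
  have F: "F \<noteq> {}" "convex F" using assms(1) facet_of_def face_of_imp_convex by auto
  then have "convex hull F = F" by (simp add: convex_hull_eq)
  then obtain u v b where "u \<ge> 0" "v \<ge> 0" "u + v = 1" "b \<in> F" "x = u *\<^sub>R 0 + v *\<^sub>R b"
    using assms(2) convex_hull_insert[OF F(1), of 0] by auto
  then show ?thesis by (intro exI[of _ v] exI[of _ b]) auto
qed

lemma pyr_sub:
  fixes P :: "'a::euclidean_space set"
  assumes "convex P" "0 \<in> P" "F facet_of P"
  shows "convex hull (insert 0 F) \<subseteq> P"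
  using assms by (intro hull_minimal) (auto simp: facet_of_def dest: face_of_imp_subset)

lemma pyr_meas:
  fixes P :: "'a::euclidean_space set"
  assumes "polytope P" "F facet_of P"
  shows "convex hull (insert 0 F) \<in> lmeasurable"
proof -
  have "compact F" using assms face_of_imp_compact polytope_imp_compact polytope_imp_convex
    facet_of_def by blast
  then show ?thesis by (intro lmeasurable_compact compact_convex_hull) auto
qed

lemma pyr_inter:
  fixes P :: "'a::euclidean_space set"
  assumes "polyhedron P" "0 \<in> interior P" "F facet_of P" "G facet_of P" "F \<noteq> G"
  shows "negligible (convex hull (insert 0 F) \<inter> convex hull (insert 0 G))"
proof -
  obtain wF where wF: "P \<subseteq> {x. wF \<bullet> x \<le> 1}" "F = P \<inter> {x. wF \<bullet> x = 1}"
    using facet_normal[OF assms(1,2,3)] by blast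
  obtain wG where wG: "P \<subseteq> {x. wG \<bullet> x \<le> 1}" "G = P \<inter> {x. wG \<bullet> x = 1}"
    using facet_normal[OF assms(1,2,4)] by blast
  have ne: "wF - wG \<noteq> 0" using wF wG assms(5) by auto
  have "convex hull (insert 0 F) \<inter> convex hull (insert 0 G) \<subseteq> {x. (wF - wG) \<bullet> x = 0}"
  proof
    fix x assume x: "x \<in> convex hull (insert 0 F) \<inter> convex hull (insert 0 G)"
    obtain t y where ty: "0 \<le> t" "t \<le> 1" "y \<in> F" "x = t *\<^sub>R y"
      using pyr_repr[OF assms(3)] x by blast
    obtain s z where sz: "0 \<le> s" "s \<le> 1" "z \<in> G" "x = s *\<^sub>R z"
      using pyr_repr[OF assms(4)] x by blast
    have 1: "wF \<bullet> x = t" using ty wF by auto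
    have "wG \<bullet> y \<le> 1" using ty wF wG by auto
    then have 2: "wG \<bullet> x \<le> t" using ty by (simp add: mult_left_le)
    have 3: "wG \<bullet> x = s" using sz wG by auto
    have "wF \<bullet> z \<le> 1" using sz wF wG by auto
    then have 4: "wF \<bullet> x \<le> s" using sz by (simp add: mult_left_le)
    show "x \<in> {x. (wF - wG) \<bullet> x = 0}" using 1 2 3 4 by (simp add: inner_diff_left)
  qed
  then show ?thesis using negligible_hyperplane[of "wF - wG" 0] ne negligible_subset by blast
qed

lemma pyr_pos:
  fixes P :: "'a::euclidean_space set"
  assumes "polytope P" "aff_dim P = int DIM('a)" "0 \<in> interior P" "F facet_of P"
  shows "measure lebesgue (convex hull (insert 0 F)) > 0"
proof -
  obtain w where w: "P \<subseteq> {x. w \<bullet> x \<le> 1}" "F = P \<inter> {x. w \<bullet> x = 1}"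
    using facet_normal[OF polytope_imp_polyhedron[OF assms(1)] assms(3,4)] by blast
  have "affine hull F \<subseteq> {x. w \<bullet> x = 1}"
    using w by (intro hull_minimal) (auto simp: affine_hyperplane)
  then have "0 \<notin> affine hull F" by auto
  then have "aff_dim (insert 0 F) = aff_dim F + 1" by (simp add: aff_dim_insert)
  also have "\<dots> = int DIM('a)" using assms(2,4) by (simp add: facet_of_def)
  finally have "aff_dim (convex hull (insert 0 F)) = int DIM('a)" by (simp add: aff_dim_convex_hull)
  then have ah: "affine hull (convex hull (insert 0 F)) = UNIV" using aff_dim_eq_full by blast
  have "rel_interior (convex hull (insert 0 F)) \<noteq> {}"
    using rel_interior_eq_empty[of "convex hull (insert 0 F)"] by simp
  then have "interior (convex hull (insert 0 F)) \<noteq> {}" using rel_interior_interior[OF ah] by simp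
  then have "\<not> negligible (convex hull (insert 0 F))"
    using negligible_convex_interior[of "convex hull (insert 0 F)"] by simp
  then have "measure lebesgue (convex hull (insert 0 F)) \<noteq> 0"
    using negligible_iff_measure0 pyr_meas[OF assms(1,4)] by blast
  then show ?thesis using measure_nonneg[of lebesgue] by (simp add: order_less_le)
qed

lemma cover:
  fixes P :: "'a::euclidean_space set"
  assumes "polytope P" "aff_dim P = int DIM('a)" "0 \<in> interior P"
  shows "P = \<Union> ((\<lambda>F. convex hull (insert 0 F)) ` {F. F facet_of P})"
proof -
  have cvx: "convex P" using assms(1) polytope_imp_convex by blast
  have ah: "affine hull P = UNIV" using assms(2) aff_dim_eq_full by blast
  have nz: "\<exists>F. F facet_of P \<and> x \<in> convex hull (insert 0 F)" if xP: "x \<in> P" and False: "x \<noteq> 0" for x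
  proof -
      obtain d where d: "0 < d" "(0 + d *\<^sub>R x) \<in> frontier P"
        using ray_to_frontier[OF polytope_imp_bounded[OF assms(1)] assms(3) False] by blast
      have d1: "d \<ge> 1"
      proof (rule ccontr)
        assume "\<not> d \<ge> 1"
        then have "d *\<^sub>R x \<noteq> 1 *\<^sub>R x" using False \<open>\<not> d \<ge> 1\<close> by (simp only: scaleR_cancel_right) simp
        moreover have "d *\<^sub>R x \<noteq> 0" using False d(1) by simp
        moreover have "d *\<^sub>R x \<in> closed_segment 0 x" using d(1) \<open>\<not> d \<ge> 1\<close>
          unfolding closed_segment_def by (intro CollectI exI[of _ d]) auto
        ultimately have "d *\<^sub>R x \<in> open_segment 0 x" unfolding open_segment_def by simp
        then have "d *\<^sub>R x \<in> interior P"
          using in_interior_closure_convex_segment[OF cvx assms(3), of x] xP closure_subset by blast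
        then show False using d(2) by (simp add: frontier_def)
      qed
      have "frontier P = rel_frontier P"
        using rel_interior_interior[OF ah] by (simp add: frontier_def rel_frontier_def)
      then obtain F where F: "F facet_of P" "d *\<^sub>R x \<in> F"
        using d(2) rel_frontier_of_polyhedron[OF polytope_imp_polyhedron[OF assms(1)]] by auto
      have "x = (1 - 1/d) *\<^sub>R 0 + (1/d) *\<^sub>R (d *\<^sub>R x)" using d(1) by simp
      then have "x \<in> closed_segment 0 (d *\<^sub>R x)" using d1 d(1)
        unfolding closed_segment_def by (intro CollectI exI[of _ "1/d"]) auto
      also have "\<dots> = convex hull {0, d *\<^sub>R x}" by (rule segment_convex_hull)
      also have "\<dots> \<subseteq> convex hull (insert 0 F)" using F by (intro hull_mono) auto
      finally show ?thesis using F by blast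
  qed
  have "P \<noteq> {0}"
  proof
    assume "P = {0}"
    then have "int DIM('a) = 0" using assms(2) by simp
    then show False by simp
  qed
  moreover have "P \<noteq> {}" using assms(3) interior_subset by blast
  ultimately obtain y where y: "y \<in> P" "y \<noteq> 0" by blast
  then obtain F0 where F0: "F0 facet_of P" "y \<in> convex hull (insert 0 F0)" using nz by blast
  show ?thesis
  proof
    have "0 \<in> P" using assms(3) interior_subset by blast
    then show "\<Union> ((\<lambda>F. convex hull (insert 0 F)) ` {F. F facet_of P}) \<subseteq> P"
      using pyr_sub[OF cvx] by blast
    show "P \<subseteq> \<Union> ((\<lambda>F. convex hull (insert 0 F)) ` {F. F facet_of P})"
    proof
      fix x assume xP: "x \<in> P"
      show "x \<in> \<Union> ((\<lambda>F. convex hull (insert 0 F)) ` {F. F facet_of P})"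
      proof (cases "x = 0")
        case True
        then show ?thesis using F0 hull_subset by fastforce
      next
        case False
        then show ?thesis using nz xP by blast
      qed
    qed
  qed
qed


lemma ext_card:
  fixes P :: "'a::euclidean_space set"
  assumes "polytope P" "aff_dim P = int DIM('a)" "F facet_of P"
  shows "finite {x. x extreme_point_of F} \<and> DIM('a) \<le> card {x. x extreme_point_of F}
    \<and> (card {x. x extreme_point_of F} = DIM('a) \<longleftrightarrow> (aff_dim P - 1) simplex F)"
proof -
  define E where "E = {x. x extreme_point_of F}"
  have fF: "F face_of P" using assms(3) facet_of_imp_face_of by blast
  have "E \<subseteq> {x. x extreme_point_of P}" using extreme_point_of_face[OF fF] by (auto simp: E_def)
  then have fin: "finite E"
    using finite_polyhedron_extreme_points[OF polytope_imp_polyhedron[OF assms(1)]] finite_subset by blast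
  have cF: "compact F" "convex F"
    using face_of_imp_compact[OF polytope_imp_convex[OF assms(1)] polytope_imp_compact[OF assms(1)] fF]
      face_of_imp_convex[OF fF] by auto
  have FE: "F = convex hull E" unfolding E_def by (rule Krein_Milman_Minkowski[OF cF])
  have adF: "aff_dim F = int DIM('a) - 1" using assms(2,3) by (simp add: facet_of_def)
  have adE: "aff_dim E = int DIM('a) - 1" using adF FE aff_dim_convex_hull[of E] by simp
  have le: "DIM('a) \<le> card E" using aff_dim_le_card[OF fin] adE by linarith
  have "card E = DIM('a) \<longleftrightarrow> (aff_dim P - 1) simplex F"
  proof
    assume "card E = DIM('a)"
    then have "\<not> affine_dependent E" using affine_independent_iff_card[of E] fin adE by simp
    moreover have "int (card E) = aff_dim P - 1 + 1" using \<open>card E = DIM('a)\<close> assms(2) by simp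
    ultimately show "(aff_dim P - 1) simplex F" unfolding simplex_def
      using FE by blast
  next
    assume "(aff_dim P - 1) simplex F"
    then obtain C where C: "\<not> affine_dependent C" "int (card C) = aff_dim P - 1 + 1" "F = convex hull C"
      unfolding simplex_def by blast
    have "E \<subseteq> C"
    proof
      fix x assume "x \<in> E"
      then have "x extreme_point_of (convex hull C)" using C(3) by (simp add: E_def)
      then show "x \<in> C" by (rule extreme_point_of_convex_hull)
    qed
    moreover have "finite C" using C(1) aff_independent_finite by blast
    ultimately have "card E \<le> card C" by (rule card_mono[rotated])
    moreover have "card C = DIM('a)" using C(2) assms(2) by simp
    ultimately show "card E = DIM('a)" using le by simp
  qed
  then show ?thesis using fin le by (simp add: E_def)
qed

lemma count_card:
  fixes P :: "'a::euclidean_space set"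
  assumes "polytope P" "0 \<in> interior P" "F facet_of P"
    and "{x. x extreme_point_of P} = v ` {1..n} \<union> (\<lambda>i. - v i) ` {1..n}"
    and "inj_on v {1..n}"
    and "\<forall>i\<in>{1..n}. \<forall>j\<in>{1..n}. v i \<noteq> - v j"
  shows "card {i\<in>{1..n}. v i \<in> F \<or> - v i \<in> F} = card {x. x extreme_point_of F}"
proof -
  obtain w where w: "P \<subseteq> {x. w \<bullet> x \<le> 1}" "F = P \<inter> {x. w \<bullet> x = 1}"
    using facet_normal[OF polytope_imp_polyhedron[OF assms(1)] assms(2,3)] by blast
  have fF: "F face_of P" using assms(3) facet_of_imp_face_of by blast
  have cvF: "convex F" using fF face_of_imp_convex by blast
  have no: "\<not> (x \<in> F \<and> - x \<in> F)" for x
  proof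
    assume "x \<in> F \<and> - x \<in> F"
    then have "(1/2) *\<^sub>R x + (1/2) *\<^sub>R (-x) \<in> F" using cvF by (intro convexD) auto
    then show False using w by auto
  qed
  define f where "f i = (if v i \<in> F then v i else - v i)" for i
  have EF: "{x. x extreme_point_of F} = F \<inter> {x. x extreme_point_of P}"
    using extreme_point_of_face[OF fF] by auto
  have "bij_betw f {i\<in>{1..n}. v i \<in> F \<or> - v i \<in> F} {x. x extreme_point_of F}"
  proof (rule bij_betwI')
    fix i j assume i: "i \<in> {i\<in>{1..n}. v i \<in> F \<or> - v i \<in> F}" and j: "j \<in> {i\<in>{1..n}. v i \<in> F \<or> - v i \<in> F}"
    have i1: "i \<in> {1..n}" and j1: "j \<in> {1..n}" using i j by simp_all
    have n1: "v i \<noteq> - v j" using assms(6) i1 j1 by blast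
    have n2: "v j \<noteq> - v i" using assms(6) i1 j1 by blast
    have vv: "v i = v j" if fe: "f i = f j"
    proof (cases "v i \<in> F"; cases "v j \<in> F")
      assume "v i \<in> F" "v j \<in> F" then show ?thesis using fe by (simp add: f_def)
    next
      assume "v i \<in> F" "v j \<notin> F" then have "v i = - v j" using fe by (simp add: f_def)
      then show ?thesis using n1 by blast
    next
      assume "v i \<notin> F" "v j \<in> F" then have "- v i = v j" using fe by (simp add: f_def)
      then show ?thesis using n2 by (metis minus_minus)
    next
      assume "v i \<notin> F" "v j \<notin> F" then show ?thesis using fe by (simp add: f_def)
    qed
    show "(f i = f j) = (i = j)"
    proof
      assume "f i = f j"
      then have "v i = v j" by (rule vv)
      then show "i = j" using inj_onD[OF assms(5) _ i1 j1] by blast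
    qed simp
  next
    fix i assume i: "i \<in> {i\<in>{1..n}. v i \<in> F \<or> - v i \<in> F}"
    then have "f i \<in> F" by (auto simp: f_def)
    moreover have "f i \<in> {x. x extreme_point_of P}" using i assms(4) by (auto simp: f_def)
    ultimately show "f i \<in> {x. x extreme_point_of F}" using EF by blast
  next
    fix y assume "y \<in> {x. x extreme_point_of F}"
    then have y: "y \<in> F" "y \<in> v ` {1..n} \<union> (\<lambda>i. - v i) ` {1..n}" using EF assms(4) by auto
    then obtain i where i: "i \<in> {1..n}" "y = v i \<or> y = - v i" by auto
    then have "f i = y" using y(1) no[of "v i"] by (auto simp: f_def)
    then show "\<exists>i\<in>{i\<in>{1..n}. v i \<in> F \<or> - v i \<in> F}. y = f i" using i y(1) by auto
  qed
  then show ?thesis by (rule bij_betw_same_card)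
qed


theorem lemma11:
  fixes P :: "'a::euclidean_space set" and v :: "nat \<Rightarrow> 'a" and n :: nat
  assumes "polytope P"
    and "aff_dim P = int DIM('a)"
    and "\<forall>x\<in>P. - x \<in> P"
    and "{x. x extreme_point_of P} = v ` {1..n} \<union> (\<lambda>i. - v i) ` {1..n}"
    and "inj_on v {1..n}"
    and "\<forall>i\<in>{1..n}. \<forall>j\<in>{1..n}. v i \<noteq> - v j"
  shows "(\<Sum>i=1..n. measure lebesgue (star_of P (v i)) / measure lebesgue P) \<ge> real DIM('a)
     \<and> ((\<Sum>i=1..n. measure lebesgue (star_of P (v i)) / measure lebesgue P) = real DIM('a)
          \<longleftrightarrow> simplicial_polytope P)"
proof -
  have cvx: "convex P" using assms(1) polytope_imp_convex by blast
  have ph: "polyhedron P" using assms(1) polytope_imp_polyhedron by blast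
  have int0: "0 \<in> interior P" using zero_interior[OF cvx assms(2,3)] .
  define Fs where "Fs = {F. F facet_of P}"
  have finFs: "finite Fs"
  proof (rule finite_subset[OF _ finite_polytope_faces[OF assms(1)]])
    show "Fs \<subseteq> {F. F face_of P}" unfolding Fs_def using facet_of_imp_face_of by blast
  qed
  define m :: "'a set \<Rightarrow> real" where "m F = measure lebesgue (convex hull (insert 0 F))" for F
  define c :: "'a set \<Rightarrow> nat" where "c F = card {i\<in>{1..n}. v i \<in> F \<or> - v i \<in> F}" for F
  have pw: "pairwise (\<lambda>F G. negligible (convex hull (insert 0 F) \<inter> convex hull (insert 0 G))) A"
    if "A \<subseteq> Fs" for A
    using that pyr_inter[OF ph int0] unfolding pairwise_def Fs_def by blast
  have meas: "\<And>F. F \<in> Fs \<Longrightarrow> convex hull (insert 0 F) \<in> lmeasurable"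
    using pyr_meas[OF assms(1)] unfolding Fs_def by blast
  have cov: "P = \<Union> ((\<lambda>F. convex hull (insert 0 F)) ` Fs)"
    using cover[OF assms(1,2) int0] unfolding Fs_def .
  have mP: "measure lebesgue P = (\<Sum>F\<in>Fs. m F)"
    unfolding m_def by (subst cov, rule measure_negligible_finite_Union_image[OF finFs meas pw]) auto
  have mstar: "measure lebesgue (star_of P (v i)) = (\<Sum>F\<in>{F\<in>Fs. v i \<in> F \<or> - v i \<in> F}. m F)" for i
  proof -
    have "star_of P (v i) = \<Union> ((\<lambda>F. convex hull (insert 0 F)) ` {F\<in>Fs. v i \<in> F \<or> - v i \<in> F})"
      unfolding star_of_def Fs_def by blast
    also have "measure lebesgue \<dots> = (\<Sum>F\<in>{F\<in>Fs. v i \<in> F \<or> - v i \<in> F}. m F)"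
      unfolding m_def using finFs meas pw[of "{F\<in>Fs. v i \<in> F \<or> - v i \<in> F}"]
      by (intro measure_negligible_finite_Union_image) auto
    finally show ?thesis .
  qed
  have swap: "(\<Sum>i=1..n. measure lebesgue (star_of P (v i))) = (\<Sum>F\<in>Fs. real (c F) * m F)"
  proof -
    have "(\<Sum>i=1..n. measure lebesgue (star_of P (v i)))
        = (\<Sum>i=1..n. \<Sum>F\<in>Fs. if v i \<in> F \<or> - v i \<in> F then m F else 0)"
      unfolding mstar using finFs by (simp add: sum.inter_filter)
    also have "\<dots> = (\<Sum>F\<in>Fs. \<Sum>i=1..n. if v i \<in> F \<or> - v i \<in> F then m F else 0)"
      by (rule sum.swap)
    also have "\<dots> = (\<Sum>F\<in>Fs. real (c F) * m F)"
    proof (rule sum.cong[OF refl])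
      fix F
      have "(\<Sum>i=1..n. if v i \<in> F \<or> - v i \<in> F then m F else 0)
          = (\<Sum>i\<in>{i\<in>{1..n}. v i \<in> F \<or> - v i \<in> F}. m F)"
        by (rule sum.inter_filter[symmetric]) simp
      also have "\<dots> = real (c F) * m F" unfolding c_def by (rule sum_constant)
      finally show "(\<Sum>i=1..n. if v i \<in> F \<or> - v i \<in> F then m F else 0) = real (c F) * m F" .
    qed
    finally show ?thesis .
  qed
  have cF: "DIM('a) \<le> c F \<and> (c F = DIM('a) \<longleftrightarrow> (aff_dim P - 1) simplex F)" if "F \<in> Fs" for F
    using ext_card[OF assms(1,2)] count_card[OF assms(1) int0 _ assms(4,5,6)] that
    unfolding c_def Fs_def by auto
  have mpos: "m F > 0" if "F \<in> Fs" for F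
    using pyr_pos[OF assms(1,2) int0] that unfolding m_def Fs_def by blast
  have "P \<noteq> {}" using int0 interior_subset by blast
  then have "Fs \<noteq> {}" using cov by auto
  then have Spos: "(\<Sum>F\<in>Fs. m F) > 0" using finFs mpos by (intro sum_pos) auto
  define S where "S = (\<Sum>F\<in>Fs. m F)"
  define T where "T = (\<Sum>F\<in>Fs. real (c F) * m F)"
  have lhs: "(\<Sum>i=1..n. measure lebesgue (star_of P (v i)) / measure lebesgue P) = T / S"
  proof -
    have "(\<Sum>i=1..n. measure lebesgue (star_of P (v i)) / measure lebesgue P)
        = (\<Sum>i=1..n. measure lebesgue (star_of P (v i))) / measure lebesgue P"
      by (rule sum_divide_distrib[symmetric])
    also have "\<dots> = T / S" unfolding swap mP T_def S_def ..
    finally show ?thesis .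
  qed
  have diff: "T - real DIM('a) * S = (\<Sum>F\<in>Fs. (real (c F) - real DIM('a)) * m F)"
    unfolding T_def S_def by (simp add: sum_distrib_left left_diff_distrib sum_subtractf)
  have nn: "\<And>F. F \<in> Fs \<Longrightarrow> (real (c F) - real DIM('a)) * m F \<ge> 0"
    using cF mpos by (simp add: less_imp_le)
  have "T - real DIM('a) * S \<ge> 0" unfolding diff using nn by (rule sum_nonneg)
  then have "real DIM('a) * S \<le> T" by linarith
  then have ge: "T / S \<ge> real DIM('a)" using Spos[folded S_def] by (simp add: pos_le_divide_eq mult.commute)
  have "T / S = real DIM('a) \<longleftrightarrow> T = real DIM('a) * S"
    using Spos[folded S_def] by (simp add: divide_eq_eq mult.commute)
  also have "\<dots> \<longleftrightarrow> T - real DIM('a) * S = 0" by linarith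
  also have "\<dots> \<longleftrightarrow> (\<forall>F\<in>Fs. (real (c F) - real DIM('a)) * m F = 0)"
    by (simp only: diff sum_nonneg_eq_0_iff[OF finFs nn])
  also have "\<dots> \<longleftrightarrow> (\<forall>F\<in>Fs. c F = DIM('a))"
  proof -
    have H: "((real (c F) - real DIM('a)) * m F = 0) = (c F = DIM('a))" if "F \<in> Fs" for F
      using mpos[OF that] by simp
    show ?thesis using H by blast
  qed
  also have "\<dots> \<longleftrightarrow> simplicial_polytope P"
  proof -
    have H: "(c F = DIM('a)) = ((aff_dim P - 1) simplex F)" if "F \<in> Fs" for F
      using cF[OF that] by blast
    show ?thesis unfolding simplicial_polytope_def using H unfolding Fs_def by blast
  qed
  finally have eq: "T / S = real DIM('a) \<longleftrightarrow> simplicial_polytope P" .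
  show ?thesis unfolding lhs using ge eq by blast
qed

end
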